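(* Let $(k,|\cdot|)$ be a non-archimedean valued field of characteristic $p\ge0$ with residue field $\bar k$, with $\mathrm{char}(\bar k)>5$ if $p=0$. Let $X$ be a Mumford curve over $k$ of genus $g\in\{5,6,7,8\}$ with $|\mathrm{Aut}(X)|=12(g-1)$, let $G=\mathrm{Aut}(X)$ and let $N$ be the normalizer in $PGL(2,k)$ of the Schottky group of $X$. If $N\cong D_5*_{\mathbf{Z}_5}A_5$, then $g=6$, $p\neq5$ and $G\cong A_5$.
   Context: A Mumford curve of genus $g\ge2$ over $k$ is a smooth projective curve over $k$ whose analytification is isomorphic to $\Gamma\backslash(\mathbf{P}^{1,\mathrm{an}}_k-\mathcal{L})$ for a discrete free subgroup $\Gamma\subseteq PGL(2,k)$ of rank $g$ (its Schottky group) with limit set $\mathcal{L}$; then $\mathrm{Aut}(X)\cong N/\Gamma$ with $N$ the normalizer of $\Gamma$. $D_n$ is the dihedral group of order $2n$, $\mathbf{Z}_n$ cyclic of order $n$, $U*_ZV$ an amalgamated free product; the isomorphism $N\cong\cdots$ is an abstract group isomorphism. *)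

theory Defs
  imports "HOL-Algebra.Algebra" Complex_Main
begin

definition nonarch_valued_field :: "('k::field \<Rightarrow> real) \<Rightarrow> bool" where
  "nonarch_valued_field v \<longleftrightarrow>
     (\<forall>x. v x \<ge> 0) \<and> (\<forall>x. v x = 0 \<longleftrightarrow> x = 0) \<and>
     (\<forall>x y. v (x * y) = v x * v y) \<and>
     (\<forall>x y. v (x + y) \<le> max (v x) (v y)) \<and>
     (\<exists>x. v x \<noteq> 0 \<and> v x \<noteq> 1) \<and>
     (\<forall>s::nat \<Rightarrow> 'k. (\<forall>e>0. \<exists>M. \<forall>m\<ge>M. \<forall>n\<ge>M. v (s m - s n) < e) \<longrightarrow>
         (\<exists>l. \<forall>e>0. \<exists>M. \<forall>n\<ge>M. v (s n - l) < e))"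

text \<open>Characteristic of the residue field {x. v x \<le> 1} / {x. v x < 1}:
  the least positive n with |n \<cdot> 1| < 1, or 0 if there is none.\<close>
definition residue_char :: "('k::field \<Rightarrow> real) \<Rightarrow> nat" where
  "residue_char v = (if \<exists>n>0. v (of_nat n) < 1 then LEAST n. n > 0 \<and> v (of_nat n) < 1 else 0)"

text \<open>A 2x2 matrix (a,b,c,d) stands for [[a,b],[c,d]].\<close>
type_synonym 'k mat22 = "'k \<times> 'k \<times> 'k \<times> 'k"

fun det22 :: "'k::field mat22 \<Rightarrow> 'k" where
  "det22 (a1,a2,a3,a4) = a1*a4 - a2*a3"

fun mmul22 :: "'k::field mat22 \<Rightarrow> 'k mat22 \<Rightarrow> 'k mat22" where
  "mmul22 (a1,a2,a3,a4) (b1,b2,b3,b4) = (a1*b1 + a2*b3, a1*b2 + a2*b4, a3*b1 + a4*b3, a3*b2 + a4*b4)"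

fun smul22 :: "'k::field \<Rightarrow> 'k mat22 \<Rightarrow> 'k mat22" where
  "smul22 t (a1,a2,a3,a4) = (t*a1, t*a2, t*a3, t*a4)"

text \<open>An element of PGL(2,k) is the class of an invertible matrix modulo nonzero scalars.\<close>
definition pclass :: "'k::field mat22 \<Rightarrow> 'k mat22 set" where
  "pclass m = {smul22 t m | t. t \<noteq> 0}"

definition PGL2 :: "('k::field mat22 set) monoid" where
  "PGL2 = \<lparr> carrier = {pclass m | m. det22 m \<noteq> 0},
            monoid.mult = (\<lambda>P Q. pclass (mmul22 (SOME m. m \<in> P) (SOME n. n \<in> Q))),
            one = pclass (1,0,0,1) \<rparr>"

text \<open>Discreteness of a subgroup of PGL(2,k) for the topology induced by v
  (quotient topology of GL(2,k)): the identity is isolated.\<close>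
definition discrete_subgroup :: "('k::field \<Rightarrow> real) \<Rightarrow> 'k mat22 set set \<Rightarrow> bool" where
  "discrete_subgroup v \<Gamma> \<longleftrightarrow>
     (\<exists>e>0. \<forall>\<gamma>\<in>\<Gamma>. (\<exists>(a1,a2,a3,a4)\<in>\<gamma>. v (a1 - 1) < e \<and> v a2 < e \<and> v a3 < e \<and> v (a4 - 1) < e)
                     \<longrightarrow> \<gamma> = \<one>\<^bsub>PGL2\<^esub>)"

definition word_eval :: "('a, 'b) monoid_scheme \<Rightarrow> ('a \<times> bool) list \<Rightarrow> 'a" where
  "word_eval G w = foldr (\<lambda>(s,e) acc. (if e then s else inv\<^bsub>G\<^esub> s) \<otimes>\<^bsub>G\<^esub> acc) w \<one>\<^bsub>G\<^esub>"

definition reduced_word :: "('a \<times> bool) list \<Rightarrow> bool" where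
  "reduced_word w \<longleftrightarrow> (\<forall>i. Suc i < length w \<longrightarrow>
       \<not> (fst (w!i) = fst (w!Suc i) \<and> snd (w!i) \<noteq> snd (w!Suc i)))"

definition free_subgroup_of_rank :: "('a, 'b) monoid_scheme \<Rightarrow> 'a set \<Rightarrow> nat \<Rightarrow> bool" where
  "free_subgroup_of_rank G H g \<longleftrightarrow> subgroup H G \<and>
     (\<exists>S. S \<subseteq> H \<and> finite S \<and> card S = g \<and> generate G S = H \<and>
        (\<forall>w. w \<noteq> [] \<and> set (map fst w) \<subseteq> S \<and> reduced_word w \<longrightarrow> word_eval G w \<noteq> \<one>\<^bsub>G\<^esub>))"

definition schottky_group :: "('k::field \<Rightarrow> real) \<Rightarrow> 'k mat22 set set \<Rightarrow> nat \<Rightarrow> bool" where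
  "schottky_group v \<Gamma> g \<longleftrightarrow> free_subgroup_of_rank PGL2 \<Gamma> g \<and> discrete_subgroup v \<Gamma>"

text \<open>The normalizer N of \<Gamma> in PGL(2,k), as a group, and N/\<Gamma> (\<cong> Aut(X)).\<close>
definition normalizer_group :: "'k::field mat22 set set \<Rightarrow> ('k mat22 set) monoid" where
  "normalizer_group \<Gamma> = PGL2\<lparr>carrier := normalizer PGL2 \<Gamma>\<rparr>"

definition aut_group :: "'k::field mat22 set set \<Rightarrow> ('k mat22 set set) monoid" where
  "aut_group \<Gamma> = normalizer_group \<Gamma> Mod \<Gamma>"

definition is_dihedral :: "('a, 'b) monoid_scheme \<Rightarrow> nat \<Rightarrow> bool" where
  "is_dihedral G n \<longleftrightarrow> group G \<and> finite (carrier G) \<and> order G = 2 * n \<and>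
     (\<exists>r s. r \<in> carrier G \<and> s \<in> carrier G \<and> group.ord G r = n \<and> group.ord G s = 2 \<and>
        s \<otimes>\<^bsub>G\<^esub> r \<otimes>\<^bsub>G\<^esub> inv\<^bsub>G\<^esub> s = inv\<^bsub>G\<^esub> r \<and> generate G {r, s} = carrier G)"

definition is_cyclic_of_order :: "('a, 'b) monoid_scheme \<Rightarrow> nat \<Rightarrow> bool" where
  "is_cyclic_of_order G n \<longleftrightarrow> group G \<and> finite (carrier G) \<and> order G = n \<and>
     (\<exists>c\<in>carrier G. generate G {c} = carrier G)"

text \<open>Internal amalgamated free product: N is the amalgamated free product of its
  subgroups U and V over Z = U \<inter> V (the canonical map U *_Z V \<rightarrow> N is an isomorphism):
  U \<union> V generates N and no nonempty alternating word in (U - Z) and (V - Z)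
  multiplies to 1 (normal form theorem).\<close>
definition alternating :: "'a set \<Rightarrow> 'a set \<Rightarrow> 'a list \<Rightarrow> bool" where
  "alternating A B xs \<longleftrightarrow> set xs \<subseteq> A \<union> B \<and>
     (\<forall>i. Suc i < length xs \<longrightarrow> (xs!i \<in> A \<and> xs!Suc i \<in> B) \<or> (xs!i \<in> B \<and> xs!Suc i \<in> A))"

definition internal_amalgam :: "('a, 'b) monoid_scheme \<Rightarrow> 'a set \<Rightarrow> 'a set \<Rightarrow> bool" where
  "internal_amalgam N U V \<longleftrightarrow> group N \<and> subgroup U N \<and> subgroup V N \<and>
     generate N (U \<union> V) = carrier N \<and>
     (\<forall>xs. xs \<noteq> [] \<and> alternating (U - (U \<inter> V)) (V - (U \<inter> V)) xs \<longrightarrow>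
        foldr (\<otimes>\<^bsub>N\<^esub>) xs \<one>\<^bsub>N\<^esub> \<noteq> \<one>\<^bsub>N\<^esub>)"

definition iso_D5_amalg_Z5_A5 :: "('a, 'b) monoid_scheme \<Rightarrow> bool" where
  "iso_D5_amalg_Z5_A5 N \<longleftrightarrow>
     (\<exists>U V. internal_amalgam N U V \<and>
        is_dihedral (N\<lparr>carrier := U\<rparr>) 5 \<and>
        (N\<lparr>carrier := V\<rparr>) \<cong> alt_group 5 \<and>
        is_cyclic_of_order (N\<lparr>carrier := U \<inter> V\<rparr>) 5)"

end

theory Submission
  imports Defs
begin


lemma pclass_self: "m \<in> pclass m"
  unfolding pclass_def by (cases m) (auto intro!: exI[of _ 1])

lemma smul22_smul22: "smul22 t (smul22 u m) = smul22 (t*u) m"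
  by (cases m) (simp add: mult.assoc)

lemma smul22_1[simp]: "smul22 1 m = m" by (cases m) simp

lemma pclass_eq_iff: "pclass m = pclass n \<longleftrightarrow> (\<exists>t. t \<noteq> 0 \<and> n = smul22 t m)"
proof
  assume h: "pclass m = pclass n"
  have "n \<in> pclass m" using pclass_self[of n] h by simp
  thus "\<exists>t. t \<noteq> 0 \<and> n = smul22 t m" unfolding pclass_def by auto
next
  assume "\<exists>t. t \<noteq> 0 \<and> n = smul22 t m"
  then obtain t where t: "t \<noteq> 0" "n = smul22 t m" by auto
  show "pclass m = pclass n"
  proof (auto simp: pclass_def)
    fix u :: 'a assume u: "u \<noteq> 0"
    show "\<exists>ta. smul22 u m = smul22 ta n \<and> ta \<noteq> 0"
      using t u by (intro exI[of _ "u / t"]) (simp add: smul22_smul22)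
  next
    fix u :: 'a assume u: "u \<noteq> 0"
    show "\<exists>ta. smul22 u n = smul22 ta m \<and> ta \<noteq> 0"
      using t u by (intro exI[of _ "u * t"]) (simp add: smul22_smul22)
  qed
qed

lemma some_pclass: obtains t where "t \<noteq> 0" "(SOME x. x \<in> pclass m) = smul22 t m"
proof -
  have "(SOME x. x \<in> pclass m) \<in> pclass m" using pclass_self by (metis someI)
  thus ?thesis using that unfolding pclass_def by auto
qed

lemma mmul22_smul: "mmul22 (smul22 t a) (smul22 u b) = smul22 (t*u) (mmul22 a b)"
  by (cases a; cases b) (simp add: algebra_simps)

lemma det22_smul: "det22 (smul22 t a) = t^2 * det22 a"
  by (cases a) (simp add: algebra_simps power2_eq_square)

lemma det22_mmul: "det22 (mmul22 a b) = det22 a * det22 b"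
  by (cases a; cases b) (simp add: algebra_simps)

lemma mmul22_assoc: "mmul22 (mmul22 a b) c = mmul22 a (mmul22 b c)"
  by (cases a; cases b; cases c) (simp add: algebra_simps)

lemma PGL2_mult: "pclass a \<otimes>\<^bsub>PGL2\<^esub> pclass b = pclass (mmul22 a b)"
proof -
  obtain t where t: "t \<noteq> 0" "(SOME x. x \<in> pclass a) = smul22 t a" by (rule some_pclass)
  obtain u where u: "u \<noteq> 0" "(SOME x. x \<in> pclass b) = smul22 u b" by (rule some_pclass)
  have "pclass a \<otimes>\<^bsub>PGL2\<^esub> pclass b = pclass (mmul22 (smul22 t a) (smul22 u b))"
    unfolding PGL2_def using t u by simp
  also have "\<dots> = pclass (smul22 (t*u) (mmul22 a b))" by (simp only: mmul22_smul)
  also have "\<dots> = pclass (mmul22 a b)"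
    unfolding pclass_eq_iff using t u by (intro exI[of _ "inverse (t*u)"]) (simp add: smul22_smul22 del: inverse_mult_distrib)
  finally show ?thesis .
qed

lemma PGL2_one: "\<one>\<^bsub>PGL2\<^esub> = pclass (1,0,0,1)" by (simp add: PGL2_def)

lemma PGL2_carrier: "x \<in> carrier PGL2 \<longleftrightarrow> (\<exists>m. det22 m \<noteq> 0 \<and> x = pclass m)"
  by (auto simp: PGL2_def)

fun adj22 :: "'k::field mat22 \<Rightarrow> 'k mat22" where
  "adj22 (a1,a2,a3,a4) = (a4, -a2, -a3, a1)"

lemma mmul_adj: "mmul22 (adj22 a) a = smul22 (det22 a) (1,0,0,1)"
  by (cases a) (simp add: algebra_simps)
lemma mmul_adj2: "mmul22 a (adj22 a) = smul22 (det22 a) (1,0,0,1)"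
  by (cases a) (simp add: algebra_simps)
lemma det_adj: "det22 (adj22 a) = det22 a" by (cases a) (simp add: algebra_simps)
lemma mmul_id1[simp]: "mmul22 (1,0,0,1) a = a" by (cases a) simp
lemma mmul_id2[simp]: "mmul22 a (1,0,0,1) = a" by (cases a) simp

lemma group_PGL2: "group (PGL2 :: 'k::field mat22 set monoid)"
proof (rule groupI)
  fix x y :: "'k mat22 set" assume "x \<in> carrier PGL2" "y \<in> carrier PGL2"
  then obtain a b where "det22 a \<noteq> 0" "x = pclass a" "det22 b \<noteq> 0" "y = pclass b"
    by (auto simp: PGL2_carrier)
  thus "x \<otimes>\<^bsub>PGL2\<^esub> y \<in> carrier PGL2"
    unfolding PGL2_carrier by (intro exI[of _ "mmul22 a b"]) (simp add: PGL2_mult det22_mmul)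
next
  show "\<one>\<^bsub>PGL2\<^esub> \<in> carrier (PGL2:: 'k mat22 set monoid)"
    unfolding PGL2_carrier PGL2_one by (intro exI[of _ "(1,0,0,1)"]) simp
next
  fix x y z :: "'k mat22 set" assume "x \<in> carrier PGL2" "y \<in> carrier PGL2" "z \<in> carrier PGL2"
  then obtain a b c where "x = pclass a" "y = pclass b" "z = pclass c"
    by (auto simp: PGL2_carrier)
  thus "x \<otimes>\<^bsub>PGL2\<^esub> y \<otimes>\<^bsub>PGL2\<^esub> z = x \<otimes>\<^bsub>PGL2\<^esub> (y \<otimes>\<^bsub>PGL2\<^esub> z)"
    by (simp add: PGL2_mult mmul22_assoc)
next
  fix x :: "'k mat22 set" assume "x \<in> carrier PGL2"
  then obtain a where "x = pclass a" by (auto simp: PGL2_carrier)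
  thus "\<one>\<^bsub>PGL2\<^esub> \<otimes>\<^bsub>PGL2\<^esub> x = x" by (simp add: PGL2_one PGL2_mult)
next
  fix x :: "'k mat22 set" assume "x \<in> carrier PGL2"
  then obtain a where a: "det22 a \<noteq> 0" "x = pclass a" by (auto simp: PGL2_carrier)
  show "\<exists>y\<in>carrier PGL2. y \<otimes>\<^bsub>PGL2\<^esub> x = \<one>\<^bsub>PGL2\<^esub>"
  proof (intro bexI[of _ "pclass (adj22 a)"])
    show "pclass (adj22 a) \<in> carrier PGL2" unfolding PGL2_carrier
      using a by (intro exI[of _ "adj22 a"]) (simp add: det_adj)
    show "pclass (adj22 a) \<otimes>\<^bsub>PGL2\<^esub> x = \<one>\<^bsub>PGL2\<^esub>"
      unfolding a(2) PGL2_mult PGL2_one mmul_adj pclass_eq_iff using a(1)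
      by (intro exI[of _ "inverse (det22 a)"]) (simp add: smul22_smul22)
  qed
qed


lemma funpow_app_add: "(f ^^ m) ((f ^^ n) i) = (f ^^ (m + n)) i"
  by (simp add: funpow_add)

lemma fix5_L1:
  assumes "(x ^^ 5) i = i" "0 < j" "j < 5" "(x ^^ j) i = i"
  shows "x i = i"
proof -
  have j: "j = 1 \<or> j = 2 \<or> j = 3 \<or> j = 4" using assms(2,3) by auto
  moreover
  { assume "j = 2"
    then have "(x ^^ 2) i = i" using assms(4) by simp
    hence "(x ^^ 4) i = i" using funpow_app_add[of 2 x 2 i] by simp
    hence "x i = i" using assms(1) funpow_app_add[of 1 x 4 i] by simp }
  moreover
  { assume "j = 3"
    then have h3: "(x ^^ 3) i = i" using assms(4) by simp
    hence h2: "(x ^^ 2) i = i" using assms(1) funpow_app_add[of 2 x 3 i] by simp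
    have e: "(x^^3) i = x ((x^^2) i)" by (simp add: eval_nat_numeral)
    hence "x i = i" using h3 h2 by simp }
  moreover
  { assume "j = 4"
    then have "(x ^^ 4) i = i" using assms(4) by simp
    hence "x i = i" using assms(1) funpow_app_add[of 1 x 4 i] by simp }
  ultimately show ?thesis using assms(4) by auto
qed

lemma fix5_L2:
  assumes "\<And>i. (x ^^ 5) i = i" "x i \<noteq> i" "p < q" "q < 5"
  shows "(x ^^ p) i \<noteq> (x ^^ q) i"
proof
  assume h: "(x ^^ p) i = (x ^^ q) i"
  have "(x ^^ (5 - p)) ((x ^^ p) i) = i" using funpow_app_add[of "5-p" x p i] assms by simp
  moreover have "(x ^^ (5 - p)) ((x ^^ q) i) = (x ^^ (q - p)) ((x ^^ 5) i)"
    using funpow_app_add[of "5-p" x q i] funpow_app_add[of "q-p" x 5 i] assms(3,4)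
    by (simp add: add.commute)
  ultimately have "(x ^^ (q - p)) i = i" using h assms(1) by simp
  moreover have "q - p < 5" "0 < q - p" using assms by arith+
  ultimately show False using fix5_L1[of x i "q-p"] assms by blast
qed

lemma fix5_distinct:
  assumes "\<And>i. (x ^^ 5) i = i" "x i \<noteq> i"
  shows "distinct [i, x i, (x^^2) i, (x^^3) i, (x^^4) i]"
proof -
  have H: "\<And>p q. p<q \<Longrightarrow> q<5 \<Longrightarrow> (x^^p) i \<noteq> (x^^q) i" using fix5_L2[OF assms] by blast
  show ?thesis using H[of 0 1] H[of 0 2] H[of 0 3] H[of 0 4] H[of 1 2] H[of 1 3] H[of 1 4]
      H[of 2 3] H[of 2 4] H[of 3 4] by simp
qed

lemma funpow_fix: "x a = a \<Longrightarrow> (x ^^ n) a = a"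
  by (induction n) auto

lemma five_cycle:
  assumes p: "x permutes {1..5::nat}" and x5: "\<And>i. (x ^^ 5) i = i" and ne: "x \<noteq> id"
  shows "distinct [1, x 1, (x^^2) 1, (x^^3) 1, (x^^4) 1]"
proof (cases "x 1 = 1")
  case False
  thus ?thesis using fix5_distinct[OF x5 False] by simp
next
  case True
  obtain i where i: "x i \<noteq> i" using ne by (auto simp: fun_eq_iff)
  have iS: "i \<in> {1..5}" using i p unfolding permutes_def by auto
  have inS: "(x ^^ k) i \<in> {1..5}" for k
  proof (induction k)
    case 0 thus ?case using iS by simp
  next
    case (Suc k) thus ?case using permutes_in_image[OF p] by (metis comp_apply funpow.simps(2))
  qed
  have ne1: "(x ^^ k) i \<noteq> 1" if "k < 5" for k
  proof
    assume h: "(x ^^ k) i = 1"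
    have "(x ^^ (5-k)) ((x ^^ k) i) = i" using funpow_app_add[of "5-k" x k i] that x5 by simp
    hence "i = 1" using h funpow_fix[of x 1 "5-k"] True by simp
    thus False using i True by simp
  qed
  define L where "L = [i, x i, (x^^2) i, (x^^3) i, (x^^4) i]"
  have d: "distinct L" unfolding L_def by (rule fix5_distinct[OF x5 i])
  have in2: "(x^^k) i \<in> {2..5}" if "k < 5" for k using inS[of k] ne1[OF that] by auto
  have "set L \<subseteq> {2..5}" unfolding L_def using in2[of 0] in2[of 1] in2[of 2] in2[of 3] in2[of 4]
    by simp
  hence "card (set L) \<le> card {2..5::nat}" by (intro card_mono) auto
  moreover have "card (set L) = 5" using distinct_card[OF d] by (simp add: L_def)
  ultimately show ?thesis by simp
qed


lemma alt_pow: "x [^]\<^bsub>alt_group n\<^esub> (k::nat) = x ^^ k"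
  by (induction k) (simp_all add: alt_group_one alt_group_mult funpow_Suc_right del: funpow.simps(2))

lemma A5_invol:
  assumes xc: "x \<in> carrier (alt_group 5)" and x5: "x [^]\<^bsub>alt_group 5\<^esub> (5::nat) = \<one>\<^bsub>alt_group 5\<^esub>"
    and ne: "x \<noteq> \<one>\<^bsub>alt_group 5\<^esub>"
  shows "\<exists>\<tau>\<in>carrier (alt_group 5). \<tau> \<noteq> \<one>\<^bsub>alt_group 5\<^esub> \<and> \<tau> \<otimes>\<^bsub>alt_group 5\<^esub> \<tau> = \<one>\<^bsub>alt_group 5\<^esub> \<and>
     \<tau> \<otimes>\<^bsub>alt_group 5\<^esub> x \<otimes>\<^bsub>alt_group 5\<^esub> \<tau> \<otimes>\<^bsub>alt_group 5\<^esub> x = \<one>\<^bsub>alt_group 5\<^esub>"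
proof -
  have p: "x permutes {1..5}" using xc by (simp add: alt_group_carrier)
  have x5': "x ^^ 5 = id" using x5 by (simp add: alt_pow alt_group_one)
  have x5i: "\<And>i. (x ^^ 5) i = i" using x5' by simp
  have ne': "x \<noteq> id" using ne by (simp add: alt_group_one)
  define a where "a k = (x ^^ k) 1" for k
  have d: "distinct [a 0, a 1, a 2, a 3, a 4]" using five_cycle[OF p x5i ne'] by (simp add: a_def)
  have xa: "x (a k) = a (Suc k)" for k by (simp add: a_def)
  have a5: "a 5 = a 0" using x5i by (simp add: a_def)
  have aS: "a k \<in> {1..5}" for k
  proof (induction k)
    case 0 thus ?case by (simp add: a_def)
  next
    case (Suc k) thus ?case using permutes_in_image[OF p] xa by metis
  qed
  have setA: "{a 0, a 1, a 2, a 3, a 4} = {1..5}"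
  proof (rule card_subset_eq)
    show "{a 0, a 1, a 2, a 3, a 4} \<subseteq> {1..5}" using aS by auto
    show "card {a 0, a 1, a 2, a 3, a 4} = card {1..5::nat}" using distinct_card[OF d] by simp
  qed simp
  have xout: "x i = i" if "i \<notin> {1..5}" for i using p that unfolding permutes_def by auto
  define \<tau> where "\<tau> = transpose (a 1) (a 4) \<circ> transpose (a 2) (a 3)"
  have x1: "x (a 0) = a 1" "x (a 1) = a 2" "x (a 2) = a 3" "x (a 3) = a 4" "x (a 4) = a 0"
    using xa[of 0] xa[of 1] xa[of 2] xa[of 3] xa[of 4] a5 by (simp_all add: eval_nat_numeral)
  have t1: "\<tau> (a 0) = a 0" "\<tau> (a 1) = a 4" "\<tau> (a 2) = a 3" "\<tau> (a 3) = a 2" "\<tau> (a 4) = a 1"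
    using d by (auto simp: \<tau>_def transpose_def)
  have tout: "\<tau> i = i" if "i \<notin> {1..5}" for i
    using that aS[of 1] aS[of 2] aS[of 3] aS[of 4] unfolding \<tau>_def
    by (metis comp_apply transpose_apply_other)
  have cases: "P i" if "P (a 0)" "P (a 1)" "P (a 2)" "P (a 3)" "P (a 4)" "\<And>i. i \<notin> {1..5} \<Longrightarrow> P i" for P i
  proof (cases "i \<in> {1..5}")
    case True
    then have "i \<in> {a 0, a 1, a 2, a 3, a 4}" using setA by simp
    thus ?thesis using that(1-5) by auto
  next
    case False thus ?thesis using that by auto
  qed
  have tt: "\<tau> \<circ> \<tau> = id"
  proof
    fix i show "(\<tau> \<circ> \<tau>) i = id i"
      by (rule cases[of "\<lambda>i. (\<tau> \<circ> \<tau>) i = id i"]) (simp_all add: t1[unfolded One_nat_def] tout)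
  qed
  have txtx: "\<tau> \<circ> x \<circ> \<tau> \<circ> x = id"
  proof
    fix i show "(\<tau> \<circ> x \<circ> \<tau> \<circ> x) i = id i"
      by (rule cases[of "\<lambda>i. (\<tau> \<circ> x \<circ> \<tau> \<circ> x) i = id i"]) (simp_all add: t1[unfolded One_nat_def] x1[unfolded One_nat_def] tout xout)
  qed
  have tne: "\<tau> \<noteq> id" using t1(2) d by (metis id_apply distinct_length_2_or_more)
  have tperm: "\<tau> permutes {1..5}" unfolding \<tau>_def
    using aS by (intro permutes_compose permutes_swap_id) auto
  have teven: "evenperm \<tau>" unfolding \<tau>_def using d
    by (simp add: evenperm_comp permutation_swap_id evenperm_swap)
  show ?thesis
  proof (intro bexI[of _ \<tau>] conjI)
    show "\<tau> \<in> carrier (alt_group 5)" using tperm teven by (simp only: alt_group_carrier)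
    show "\<tau> \<otimes>\<^bsub>alt_group 5\<^esub> x \<otimes>\<^bsub>alt_group 5\<^esub> \<tau> \<otimes>\<^bsub>alt_group 5\<^esub> x = \<one>\<^bsub>alt_group 5\<^esub>"
      using txtx by (simp only: alt_group_mult alt_group_one)
  qed (simp_all add: alt_group_mult alt_group_one tt tne)
qed


definition cancels :: "('a \<times> bool) \<Rightarrow> ('a \<times> bool) \<Rightarrow> bool" where
  "cancels a b \<longleftrightarrow> fst a = fst b \<and> snd a \<noteq> snd b"

lemma cancels_sym: "cancels a b = cancels b a" by (auto simp: cancels_def)

lemma reduced_Nil[simp]: "reduced_word []" by (simp add: reduced_word_def)

lemma all_Suc_shift: "(\<forall>i. Suc i < Suc n \<longrightarrow> Q i) \<longleftrightarrow> ((0 < n \<longrightarrow> Q 0) \<and> (\<forall>i. Suc i < n \<longrightarrow> Q (Suc i)))"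
  apply (rule iffI)
   apply simp
  apply clarify
  subgoal for i by (cases i) auto
  done

lemma reduced_Cons: "reduced_word (a # w) \<longleftrightarrow> reduced_word w \<and> (w = [] \<or> \<not> cancels a (hd w))"
  unfolding reduced_word_def length_Cons all_Suc_shift
  by (cases w) (auto simp: cancels_def)

lemma reduced_append: "reduced_word (u @ v) \<longleftrightarrow> reduced_word u \<and> reduced_word v \<and>
   (u = [] \<or> v = [] \<or> \<not> cancels (last u) (hd v))"
  by (induction u) (auto simp: reduced_Cons)

definition letter :: "('a, 'b) monoid_scheme \<Rightarrow> ('a \<times> bool) \<Rightarrow> 'a" where
  "letter G a = (if snd a then fst a else inv\<^bsub>G\<^esub> (fst a))"

lemma word_eval_Nil[simp]: "word_eval G [] = \<one>\<^bsub>G\<^esub>" by (simp add: word_eval_def)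
lemma word_eval_Cons: "word_eval G (a # w) = letter G a \<otimes>\<^bsub>G\<^esub> word_eval G w"
  by (cases a) (simp add: word_eval_def letter_def)

context group
begin

lemma letter_closed: "fst a \<in> carrier G \<Longrightarrow> letter G a \<in> carrier G"
  by (simp add: letter_def)

lemma word_eval_closed: "set (map fst w) \<subseteq> carrier G \<Longrightarrow> word_eval G w \<in> carrier G"
  by (induction w) (auto simp: word_eval_Cons letter_closed)

lemma word_eval_append: "set (map fst u) \<subseteq> carrier G \<Longrightarrow> set (map fst v) \<subseteq> carrier G \<Longrightarrow>
   word_eval G (u @ v) = word_eval G u \<otimes> word_eval G v"
  by (induction u) (auto simp: word_eval_Cons letter_closed word_eval_closed m_assoc)

lemma letter_cancel: "fst a \<in> carrier G \<Longrightarrow> cancels a b \<Longrightarrow> letter G a \<otimes> letter G b = \<one>"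
  by (cases a; cases b) (auto simp: cancels_def letter_def)

definition cancel_cons :: "('a \<times> bool) \<Rightarrow> ('a \<times> bool) list \<Rightarrow> ('a \<times> bool) list" where
  "cancel_cons a w = (if w \<noteq> [] \<and> cancels a (hd w) then tl w else a # w)"

lemma cancel_cons_eval:
  assumes "fst a \<in> carrier G" "set (map fst w) \<subseteq> carrier G"
  shows "word_eval G (cancel_cons a w) = word_eval G (a # w)"
proof (cases "w \<noteq> [] \<and> cancels a (hd w)")
  case True
  then obtain b w' where w: "w = b # w'" by (cases w) auto
  have "word_eval G (a # w) = (letter G a \<otimes> letter G b) \<otimes> word_eval G w'"
    using assms w by (simp add: word_eval_Cons m_assoc letter_closed word_eval_closed)
  also have "\<dots> = word_eval G w'" using letter_cancel[OF assms(1)] True w assms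
    by (simp add: word_eval_closed)
  finally show ?thesis using True w by (simp add: cancel_cons_def)
qed (auto simp: cancel_cons_def)

lemma cancel_cons_reduced: "reduced_word w \<Longrightarrow> reduced_word (cancel_cons a w)"
  by (cases w) (auto simp: cancel_cons_def reduced_Cons)

lemma cancel_cons_set: "set (map fst (cancel_cons a w)) \<subseteq> insert (fst a) (set (map fst w))"
  by (cases w) (auto simp: cancel_cons_def)

definition reduce :: "('a \<times> bool) list \<Rightarrow> ('a \<times> bool) list" where
  "reduce w = foldr cancel_cons w []"

lemma reduce_props:
  assumes "set (map fst w) \<subseteq> carrier G"
  shows "reduced_word (reduce w) \<and> set (map fst (reduce w)) \<subseteq> set (map fst w) \<and>
         word_eval G (reduce w) = word_eval G w"
  using assms
proof (induction w)
  case Nil thus ?case by (simp add: reduce_def)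
next
  case (Cons a w)
  have r: "reduce (a # w) = cancel_cons a (reduce w)" by (simp add: reduce_def)
  have IH: "reduced_word (reduce w)" "set (map fst (reduce w)) \<subseteq> set (map fst w)"
     "word_eval G (reduce w) = word_eval G w" using Cons by auto
  have s: "set (map fst (reduce w)) \<subseteq> carrier G" using IH(2) Cons.prems by auto
  have s2: "set (map fst (cancel_cons a (reduce w))) \<subseteq> set (map fst (a # w))"
    using cancel_cons_set[of a "reduce w"] IH(2) by auto
  show ?case unfolding r
    using cancel_cons_reduced[OF IH(1)] s2
      cancel_cons_eval[of a "reduce w", OF _ s] Cons.prems IH(3)
    by (simp add: word_eval_Cons)
qed

lemma generate_words:
  assumes S: "S \<subseteq> carrier G" and x: "x \<in> generate G S"
  shows "\<exists>w. reduced_word w \<and> set (map fst w) \<subseteq> S \<and> word_eval G w = x"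
  using x
proof (induction rule: generate.induct)
  case one thus ?case by (intro exI[of _ "[]"]) simp
next
  case (incl h) thus ?case using S
    by (intro exI[of _ "[(h,True)]"]) (auto simp: word_eval_Cons letter_def reduced_word_def)
next
  case (inv h) thus ?case using S
    by (intro exI[of _ "[(h,False)]"]) (auto simp: word_eval_Cons letter_def reduced_word_def)
next
  case (eng h1 h2)
  then obtain u v where u: "reduced_word u" "set (map fst u) \<subseteq> S" "word_eval G u = h1"
    and v: "reduced_word v" "set (map fst v) \<subseteq> S" "word_eval G v = h2" by blast
  have s: "set (map fst (u @ v)) \<subseteq> carrier G" using u v S by auto
  have uv: "set (map fst (u @ v)) \<subseteq> S" using u v by auto
  have "set (map fst (reduce (u @ v))) \<subseteq> S" using reduce_props[OF s] uv by (meson order_trans)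
  thus ?case using reduce_props[OF s] u v S
    by (intro exI[of _ "reduce (u @ v)"]) (simp add: word_eval_append)
qed

lemma word_eval_replicate:
  assumes "set (map fst w) \<subseteq> carrier G"
  shows "word_eval G (concat (replicate n w)) = word_eval G w [^] n"
proof (induction n)
  case 0 thus ?case by simp
next
  case (Suc n)
  have "set (map fst (concat (replicate n w))) \<subseteq> set (map fst w)" by (induction n) auto
  hence s: "set (map fst (concat (replicate n w))) \<subseteq> carrier G" using assms by auto
  have "word_eval G (concat (replicate (Suc n) w)) = word_eval G w \<otimes> word_eval G w [^] n"
    using word_eval_append[OF assms s] Suc by simp
  also have "\<dots> = word_eval G w [^] Suc n"
    using word_eval_closed[OF assms] by (rule nat_pow_Suc2[symmetric])
  finally show ?case .
qed

lemma reduced_replicate: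
  assumes "reduced_word w" "w \<noteq> []" "\<not> cancels (last w) (hd w)"
  shows "reduced_word (concat (replicate n w))"
proof (induction n)
  case 0 thus ?case by simp
next
  case (Suc n)
  show ?case
  proof (cases n)
    case 0 thus ?thesis using assms by simp
  next
    case (Suc m)
    have "hd (concat (replicate n w)) = hd w" using Suc assms(2) by simp
    thus ?thesis using Suc.IH assms by (simp add: reduced_append)
  qed
qed

lemma conj_pow: "g \<in> carrier G \<Longrightarrow> y \<in> carrier G \<Longrightarrow> (g \<otimes> y \<otimes> inv g) [^] (n::nat) = g \<otimes> y [^] n \<otimes> inv g"
proof (induction n)
  case 0 thus ?case by simp
next
  case (Suc n)
  have "(g \<otimes> y \<otimes> inv g) [^] Suc n = (g \<otimes> y [^] n \<otimes> inv g) \<otimes> (g \<otimes> y \<otimes> inv g)"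
    using Suc by simp
  also have "\<dots> = g \<otimes> y [^] n \<otimes> (inv g \<otimes> g) \<otimes> y \<otimes> inv g" using Suc.prems by (simp only: m_assoc inv_closed nat_pow_closed m_closed)
  also have "\<dots> = g \<otimes> (y [^] n \<otimes> y) \<otimes> inv g" using Suc.prems by (simp add: m_assoc l_inv)
  finally show ?case by simp
qed

lemma free_torsion:
  assumes FREE: "\<And>w. w \<noteq> [] \<Longrightarrow> set (map fst w) \<subseteq> S \<Longrightarrow> reduced_word w \<Longrightarrow> word_eval G w \<noteq> \<one>"
    and S: "S \<subseteq> carrier G"
  shows "reduced_word w \<Longrightarrow> w \<noteq> [] \<Longrightarrow> set (map fst w) \<subseteq> S \<Longrightarrow> (n::nat) > 0 \<Longrightarrow> word_eval G w [^] n \<noteq> \<one>"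
proof (induction "length w" arbitrary: w rule: less_induct)
  case less
  have wc: "set (map fst w) \<subseteq> carrier G" using less.prems S by auto
  show ?case
  proof (cases "cancels (last w) (hd w)")
    case False
    have "set (map fst (concat (replicate n w))) \<subseteq> set (map fst w)" by (induction n) auto
    hence s1: "set (map fst (concat (replicate n w))) \<subseteq> S" using less.prems(3) by auto
    have ne: "concat (replicate n w) \<noteq> []" using less.prems(2,4) by (cases n) auto
    have "word_eval G (concat (replicate n w)) \<noteq> \<one>"
      using FREE[OF ne s1 reduced_replicate[OF less.prems(1,2) False]] .
    thus ?thesis using word_eval_replicate[OF wc] by simp
  next
    case True
    obtain a w1 where w1: "w = a # w1" using less.prems(2) by (cases w) auto
    have "w1 \<noteq> []" using True w1 by (auto simp: cancels_def)
    then obtain m b where m: "w1 = m @ [b]" by (metis rev_exhaust)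
    have ab: "cancels b a" using True w1 m by simp
    have "m \<noteq> []" using ab less.prems(1) w1 m by (auto simp: reduced_Cons cancels_sym)
    have mr: "reduced_word m" using less.prems(1) w1 m by (simp add: reduced_Cons reduced_append)
    have ms: "set (map fst m) \<subseteq> S" using less.prems(3) w1 m by auto
    hence mc: "set (map fst m) \<subseteq> carrier G" using S by auto
    have ac: "fst a \<in> carrier G" using wc w1 by simp
    have bc: "fst b \<in> carrier G" using wc w1 m by simp
    have lb: "letter G b = inv (letter G a)"
      using letter_cancel[OF bc ab] letter_closed[OF ac] letter_closed[OF bc]
      by (metis inv_equality)
    have ev: "word_eval G w = letter G a \<otimes> word_eval G m \<otimes> inv (letter G a)"
    proof -
      have "word_eval G w = letter G a \<otimes> (word_eval G m \<otimes> word_eval G [b])"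
        using w1 m mc bc by (simp add: word_eval_Cons word_eval_append)
      also have "word_eval G [b] = letter G b" using bc by (simp add: word_eval_Cons letter_closed)
      finally show ?thesis using lb ac mc by (simp add: m_assoc letter_closed word_eval_closed)
    qed
    have IH: "word_eval G m [^] n \<noteq> \<one>"
      using less.hyps[of m] w1 m \<open>m \<noteq> []\<close> mr ms less.prems(4) by simp
    show ?thesis
    proof
      assume "word_eval G w [^] n = \<one>"
      hence "letter G a \<otimes> word_eval G m [^] n \<otimes> inv (letter G a) = \<one>"
        using ev conj_pow[OF letter_closed[OF ac] word_eval_closed[OF mc]] by simp
      hence "word_eval G m [^] n = \<one>" using letter_closed[OF ac] word_eval_closed[OF mc]
        by (metis inv_closed inv_inv l_inv m_closed nat_pow_closed r_one inv_equality m_assoc)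
      thus False using IH by simp
    qed
  qed
qed

end


primrec mpow22 :: "'k::field mat22 \<Rightarrow> nat \<Rightarrow> 'k mat22" where
  "mpow22 C 0 = (1,0,0,1)"
| "mpow22 C (Suc n) = mmul22 (mpow22 C n) C"

lemma pclass_pow: "pclass C [^]\<^bsub>PGL2\<^esub> (n::nat) = pclass (mpow22 C n)"
  by (induction n) (simp_all add: PGL2_one PGL2_mult)

fun pp :: "'k::field \<Rightarrow> 'k \<Rightarrow> nat \<Rightarrow> 'k" where
  "pp t d 0 = 0"
| "pp t d (Suc 0) = 1"
| "pp t d (Suc (Suc n)) = t * pp t d (Suc n) - d * pp t d n"

lemma mpow22_formula:
  fixes c1 c2 c3 c4 :: "'k::field"
  defines "t \<equiv> c1 + c4" and "d \<equiv> c1 * c4 - c2 * c3"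
  shows "mpow22 (c1,c2,c3,c4) (Suc n) =
     (pp t d (Suc n) * c1 - d * pp t d n, pp t d (Suc n) * c2, pp t d (Suc n) * c3, pp t d (Suc n) * c4 - d * pp t d n)"
proof (induction n)
  case 0 thus ?case by simp
next
  case (Suc n)
  show ?case using Suc by (simp add: t_def d_def algebra_simps)
qed

lemma pp5: "pp t d 5 = t^4 - 3*t^2*d + d^2" "pp t d 4 = t^3 - 2*t*d"
  by (simp_all add: eval_nat_numeral algebra_simps power2_eq_square power3_eq_cube)


lemma det_mpow: "det22 (mpow22 C n) = det22 C ^ n"
  by (induction n) (simp_all add: det22_mmul)

lemma char5_disc:
  fixes c1 c2 c3 c4 e :: "'k::field"
  assumes five: "(5::'k) = 0" and P: "mpow22 (c1,c2,c3,c4) 5 = (e,0,0,e)"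
    and ns: "\<not> (c2 = 0 \<and> c3 = 0 \<and> c1 = c4)"
  shows "(c1 - c4)^2 + 4 * c2 * c3 = 0"
proof -
  define t where "t = c1 + c4"
  define d where "d = c1 * c4 - c2 * c3"
  have F: "mpow22 (c1,c2,c3,c4) 5 =
     (pp t d 5 * c1 - d * pp t d 4, pp t d 5 * c2, pp t d 5 * c3, pp t d 5 * c4 - d * pp t d 4)"
    using mpow22_formula[of c1 c2 c3 c4 4] by (simp add: t_def d_def eval_nat_numeral)
  have h: "pp t d 5 * c2 = 0" "pp t d 5 * c3 = 0" "pp t d 5 * (c1 - c4) = 0"
    using P F by (simp_all add: algebra_simps)
  have p0: "pp t d 5 = 0" using h ns by auto
  have "pp t d 5 = (t^2 + d)^2 - 5 * t^2 * d" by (simp add: pp5 algebra_simps power2_eq_square power4_eq_xxxx)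
  hence "(t^2 + d)^2 = 0" using p0 five by simp
  hence td: "t^2 + d = 0" by simp
  have "(c1 - c4)^2 + 4 * c2 * c3 = (t^2 + d) - 5 * d"
    by (simp add: t_def d_def algebra_simps power2_eq_square)
  thus ?thesis using td five by simp
qed

lemma char5_pow:
  fixes c1 c2 c3 c4 :: "'k::field"
  assumes five: "(5::'k) = 0" and disc: "(c1 - c4)^2 + 4 * c2 * c3 = 0"
    and det: "det22 (c1,c2,c3,c4) \<noteq> 0"
  shows "\<exists>e. e \<noteq> 0 \<and> mpow22 (c1,c2,c3,c4) 5 = (e,0,0,e)"
proof -
  define t where "t = c1 + c4"
  define d where "d = c1 * c4 - c2 * c3"
  have F: "mpow22 (c1,c2,c3,c4) 5 =
     (pp t d 5 * c1 - d * pp t d 4, pp t d 5 * c2, pp t d 5 * c3, pp t d 5 * c4 - d * pp t d 4)"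
    using mpow22_formula[of c1 c2 c3 c4 4] by (simp add: t_def d_def eval_nat_numeral)
  have "t^2 + d = (c1 - c4)^2 + 4 * c2 * c3 + 5 * d"
    by (simp add: t_def d_def algebra_simps power2_eq_square)
  hence td: "t^2 + d = 0" using disc five by simp
  have "pp t d 5 = (t^2 + d)^2 - 5 * t^2 * d" by (simp add: pp5 algebra_simps power2_eq_square power4_eq_xxxx)
  hence p0: "pp t d 5 = 0" using td five by simp
  have M: "mpow22 (c1,c2,c3,c4) 5 = (- d * pp t d 4, 0, 0, - d * pp t d 4)" using F p0 by simp
  have "det22 (mpow22 (c1,c2,c3,c4) 5) \<noteq> 0" using det by (simp add: det_mpow)
  hence "- d * pp t d 4 \<noteq> 0" using M by auto
  thus ?thesis using M by blast
qed


lemma mmul22_smul_l: "mmul22 (smul22 t a) b = smul22 t (mmul22 a b)"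
  by (cases a; cases b) (simp add: algebra_simps)
lemma mmul22_smul_r: "mmul22 a (smul22 t b) = smul22 t (mmul22 a b)"
  by (cases a; cases b) (simp add: algebra_simps)
lemma mmul22_zero_l[simp]: "mmul22 (0,0,0,0) a = (0,0,0,0)" by (cases a) simp
lemma mmul22_zero_r[simp]: "mmul22 a (0,0,0,0) = (0,0,0,0)" by (cases a) simp
lemma smul22_zero[simp]: "smul22 t (0,0,0,0) = (0,0,0,0)" by simp
lemma smul22_eq_zero: "t \<noteq> 0 \<Longrightarrow> smul22 t a = (0,0,0,0) \<longleftrightarrow> a = (0,0,0,0)"
  by (cases a) simp

lemma mmul22_scal_r[simp]: "mmul22 a (t,0,0,t) = smul22 t a" by (cases a) (simp add: algebra_simps)
lemma mmul22_scal_l[simp]: "mmul22 (t,0,0,t) a = smul22 t a" by (cases a) (simp add: algebra_simps)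

lemma norm_line:
  fixes c1 c2 c3 c4 kk al be :: "'k::field" and Xm :: "'k mat22"
  assumes two: "(2::'k) \<noteq> 0" and disc: "(c1 - c4)^2 + 4 * c2 * c3 = 0"
    and dx: "det22 Xm \<noteq> 0"
    and E: "mmul22 (mmul22 Xm (c1,c2,c3,c4)) (adj22 Xm) = smul22 kk (al + be * c1, be * c2, be * c3, al + be * c4)"
  shows "mmul22 (mmul22 (c1 - c4, 2 * c2, 2 * c3, c4 - c1) Xm) (c1 - c4, 2 * c2, 2 * c3, c4 - c1) = (0,0,0,0)"
proof -
  define M where "M = (c1 - c4, 2 * c2, 2 * c3, c4 - c1)"
  define t where "t = c1 + c4"
  define dl where "dl = det22 Xm"
  obtain x1 x2 x3 x4 where Xm: "Xm = (x1,x2,x3,x4)" by (cases Xm) auto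
  define E' where "E' = mmul22 (mmul22 Xm (c1,c2,c3,c4)) (adj22 Xm)"
  have a: "mmul22 (mmul22 Xm M) (adj22 Xm) = (2 * fst E' - t * dl, 2 * fst (snd E'), 2 * fst (snd (snd E')),
      2 * snd (snd (snd E')) - t * dl)"
    unfolding E'_def M_def Xm t_def dl_def by (simp add: algebra_simps)
  have Q: "mmul22 (mmul22 Xm M) (adj22 Xm) = (2 * kk * (al + be * c1) - t * dl, 2 * kk * be * c2,
      2 * kk * be * c3, 2 * kk * (al + be * c4) - t * dl)"
    unfolding a E'_def E by (simp add: algebra_simps)
  have tr: "fst (mmul22 (mmul22 Xm M) (adj22 Xm)) + snd (snd (snd (mmul22 (mmul22 Xm M) (adj22 Xm)))) = 0"
    unfolding M_def Xm by (simp add: algebra_simps)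
  have "2 * (2 * kk * al + kk * be * t - t * dl) = 0"
    using tr unfolding Q by (simp add: t_def algebra_simps)
  hence g: "2 * kk * al + kk * be * t - t * dl = 0" using two mult_eq_0_iff by blast
  have Q2: "mmul22 (mmul22 Xm M) (adj22 Xm) = smul22 (kk * be) M"
  proof -
    have e: "2 * kk * (al + be * c1) - t * dl = (2 * kk * al + kk * be * t - t * dl) + kk * be * (c1 - c4)"
      "2 * kk * (al + be * c4) - t * dl = (2 * kk * al + kk * be * t - t * dl) + kk * be * (c4 - c1)"
      by (simp_all add: t_def algebra_simps)
    show ?thesis unfolding Q e g by (simp add: M_def algebra_simps)
  qed
  have c: "mmul22 (mmul22 (mmul22 Xm M) (adj22 Xm)) Xm = smul22 dl (mmul22 Xm M)"
    by (simp add: mmul22_assoc mmul_adj mmul22_smul_r dl_def)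
  hence c2: "smul22 dl (mmul22 Xm M) = smul22 (kk * be) (mmul22 M Xm)"
    unfolding Q2 by (simp add: mmul22_smul_l)
  have MM: "mmul22 M M = (0,0,0,0)"
  proof -
    have "mmul22 M M = ((c1 - c4)^2 + 4 * c2 * c3, 0, 0, (c1 - c4)^2 + 4 * c2 * c3)"
      by (simp add: M_def algebra_simps power2_eq_square)
    thus ?thesis using disc by simp
  qed
  have "smul22 dl (mmul22 (mmul22 M Xm) M) = mmul22 M (smul22 dl (mmul22 Xm M))"
    by (simp add: mmul22_smul_r mmul22_assoc)
  also have "\<dots> = smul22 (kk * be) (mmul22 (mmul22 M M) Xm)"
    unfolding c2 by (simp add: mmul22_smul_r mmul22_assoc)
  also have "\<dots> = (0,0,0,0)" by (cases Xm) (simp add: MM)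
  finally have "smul22 dl (mmul22 (mmul22 M Xm) M) = (0,0,0,0)" .
  thus ?thesis using dx unfolding dl_def M_def by (simp add: smul22_eq_zero)
qed


lemma invol_trace:
  fixes x1 x2 x3 x4 e :: "'k::field"
  assumes "mmul22 (x1,x2,x3,x4) (x1,x2,x3,x4) = (e,0,0,e)" and "\<not> (x2 = 0 \<and> x3 = 0 \<and> x1 = x4)"
  shows "x4 = - x1"
proof -
  have h0: "x1 * x1 + x2 * x3 = e" "x1 * x2 + x2 * x4 = 0" "x1 * x3 + x3 * x4 = 0" "x2 * x3 + x4 * x4 = e"
    using assms(1) by (simp_all add: algebra_simps)
  have h3: "(x1 - x4) * (x1 + x4) = (x1 * x1 + x2 * x3) - (x2 * x3 + x4 * x4)" by (simp add: algebra_simps)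
  have h: "x2 * (x1 + x4) = 0" "x3 * (x1 + x4) = 0" "(x1 - x4) * (x1 + x4) = 0"
    using h0 h3 by (simp_all add: algebra_simps)
  hence "x1 + x4 = 0" using assms(2) by auto
  thus ?thesis by (simp add: eq_neg_iff_add_eq_0 add.commute)
qed

lemma disc_prod:
  fixes m1 m2 m3 s1 s2 s3 t1 t2 t3 :: "'k::field"
  assumes MM: "mmul22 (m1,m2,m3,-m1) (m1,m2,m3,-m1) = (0,0,0,0)"
    and MSM: "mmul22 (mmul22 (m1,m2,m3,-m1) (s1,s2,s3,-s1)) (m1,m2,m3,-m1) = (0,0,0,0)"
    and MTM: "mmul22 (mmul22 (m1,m2,m3,-m1) (t1,t2,t3,-t1)) (m1,m2,m3,-m1) = (0,0,0,0)"
    and nz: "(m1,m2,m3,-m1) \<noteq> (0,0,0,0)"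
  shows "(s2 * t3 - s3 * t2)^2 + (4 * (s1 * t2) - 4 * (s2 * t1)) * (s3 * t1 - s1 * t3) = 0"
proof (cases "m2 = 0")
  case False
  define u where "u = m1 / m2"
  have n1: "m1 = u * m2" using False by (simp add: u_def)
  have "(m1 * s1 + m2 * s3) * m2 + (m1 * s2 - m2 * s1) * (- m1) = 0" using MSM by (simp add: algebra_simps)
  hence "m2 * m2 * (s3 - (u*u*s2 - 2*u*s1)) = 0" unfolding n1 by (simp add: algebra_simps)
  hence s3: "s3 = u*u*s2 - 2*u*s1" using False by simp
  have "(m1 * t1 + m2 * t3) * m2 + (m1 * t2 - m2 * t1) * (- m1) = 0" using MTM by (simp add: algebra_simps)
  hence "m2 * m2 * (t3 - (u*u*t2 - 2*u*t1)) = 0" unfolding n1 by (simp add: algebra_simps)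
  hence t3: "t3 = u*u*t2 - 2*u*t1" using False by simp
  show ?thesis unfolding s3 t3 by (simp add: power2_eq_square algebra_simps)
next
  case True
  have "m1 * m1 = 0" using MM True by simp
  hence m1: "m1 = 0" by simp
  hence m3: "m3 \<noteq> 0" using nz True by simp
  have "m3 * s2 * m3 = 0" using MSM True m1 by (simp add: algebra_simps)
  hence s2: "s2 = 0" using m3 by simp
  have "m3 * t2 * m3 = 0" using MTM True m1 by (simp add: algebra_simps)
  hence t2: "t2 = 0" using m3 by simp
  show ?thesis using s2 t2 by simp
qed


lemma pow_sub: "x [^]\<^bsub>G\<lparr>carrier := A\<rparr>\<^esub> (n::nat) = x [^]\<^bsub>G\<^esub> n"
  by (simp add: nat_pow_def)

lemma pclass_scalar: "e \<noteq> 0 \<Longrightarrow> pclass (e,0,0,e) = \<one>\<^bsub>PGL2\<^esub>"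
  unfolding PGL2_one pclass_eq_iff by (intro exI[of _ "inverse e"]) simp

lemma pclass_is_one: "pclass A = \<one>\<^bsub>PGL2\<^esub> \<Longrightarrow> \<exists>e. e \<noteq> 0 \<and> A = (e,0,0,e)"
  unfolding PGL2_one pclass_eq_iff
  by (metis (no_types, lifting) eq_commute mult_1_right mult_zero_right smul22.simps pclass_eq_iff)

lemma inv_pclass:
  assumes "det22 C \<noteq> 0"
  shows "inv\<^bsub>PGL2\<^esub> (pclass C) = pclass (adj22 C)"
proof (rule group.inv_equality[OF group_PGL2])
  show "pclass (adj22 C) \<otimes>\<^bsub>PGL2\<^esub> pclass C = \<one>\<^bsub>PGL2\<^esub>"
    unfolding PGL2_mult mmul_adj using assms by (simp add: pclass_scalar)
  show "pclass C \<in> carrier PGL2" using assms unfolding PGL2_carrier by blast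
  show "pclass (adj22 C) \<in> carrier PGL2" using assms unfolding PGL2_carrier by (metis det_adj)
qed

context group
begin

lemma index2_normal:
  assumes fin: "finite (carrier G)" and Z: "subgroup Z G" and card: "card (carrier G) = 2 * card Z"
    and s: "s \<in> carrier G" "s \<notin> Z" and c: "c \<in> Z"
  shows "s \<otimes> c \<otimes> inv s \<in> Z"
proof -
  have Zc: "Z \<subseteq> carrier G" using Z by (rule subgroup.subset)
  define f where "f z = z \<otimes> s" for z
  have inj: "inj_on f Z" unfolding f_def inj_on_def using Zc s by (meson r_cancel subsetD)
  have img: "f ` Z \<subseteq> carrier G - Z"
  proof
    fix y assume "y \<in> f ` Z"
    then obtain z where z: "z \<in> Z" "y = z \<otimes> s" by (auto simp: f_def)
    have yc: "y \<in> carrier G" using z Zc s by auto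
    moreover have "y \<notin> Z"
    proof
      assume "y \<in> Z"
      hence "inv z \<otimes> y \<in> Z" using z Z by (simp add: subgroup.m_closed subgroup.m_inv_closed)
      moreover have "inv z \<otimes> y = s" using z Zc s by (simp add: m_assoc[symmetric] subsetD)
      ultimately show False using s by simp
    qed
    ultimately show "y \<in> carrier G - Z" by simp
  qed
  have fZ: "finite Z" using fin Zc finite_subset by blast
  have "card (f ` Z) = card Z" using card_image[OF inj] .
  also have "\<dots> = card (carrier G - Z)" using card card_Diff_subset[OF fZ Zc] by simp
  finally have eq: "f ` Z = carrier G - Z"
    using card_subset_eq[OF _ img] fin by simp
  have "s \<otimes> c \<in> carrier G - Z"
  proof -
    have sc: "s \<otimes> c \<in> carrier G" using s c Zc by auto
    moreover have "s \<otimes> c \<notin> Z"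
    proof
      assume "s \<otimes> c \<in> Z"
      hence "(s \<otimes> c) \<otimes> inv c \<in> Z" using c Z by (simp add: subgroup.m_closed subgroup.m_inv_closed)
      moreover have "(s \<otimes> c) \<otimes> inv c = s" using s c Zc by (simp add: m_assoc subsetD)
      ultimately show False using s by simp
    qed
    ultimately show ?thesis by simp
  qed
  then obtain z where z: "z \<in> Z" "s \<otimes> c = z \<otimes> s" using eq by (auto simp: f_def)
  have "s \<otimes> c \<otimes> inv s = z" using z Zc s by (simp add: m_assoc subsetD)
  thus ?thesis using z by simp
qed

end


lemma char5_contra:
  fixes U V :: "'k::field mat22 set set"
  assumes five: "(5::'k) = 0" and two: "(2::'k) \<noteq> 0"
    and sU: "subgroup U PGL2" and sV: "subgroup V PGL2"
    and cyc: "is_cyclic_of_order (PGL2\<lparr>carrier := U \<inter> V\<rparr>) 5"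
    and dih: "is_dihedral (PGL2\<lparr>carrier := U\<rparr>) 5"
    and iso: "PGL2\<lparr>carrier := V\<rparr> \<cong> alt_group 5"
  shows "\<exists>s s'. s \<in> U - (U \<inter> V) \<and> s' \<in> V - (U \<inter> V) \<and>
           (s \<otimes>\<^bsub>PGL2\<^esub> s') [^]\<^bsub>PGL2\<^esub> (5::nat) = \<one>\<^bsub>PGL2\<^esub>"
proof -
  interpret P: group "PGL2 :: 'k mat22 set monoid" by (rule group_PGL2)
  define Zs where "Zs = U \<inter> V"
  have sZ: "subgroup Zs PGL2" unfolding Zs_def using P.subgroups_Inter_pair[OF sU sV] .
  have ZG: "group (PGL2\<lparr>carrier := Zs\<rparr>)" using P.subgroup_imp_group[OF sZ] .
  have UG: "group (PGL2\<lparr>carrier := U\<rparr>)" using P.subgroup_imp_group[OF sU] .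
  have VG: "group (PGL2\<lparr>carrier := V\<rparr>)" using P.subgroup_imp_group[OF sV] .
  have ZsU: "Zs \<subseteq> U" and ZsV: "Zs \<subseteq> V" by (auto simp: Zs_def)
  have Zcar: "Zs \<subseteq> carrier PGL2" using sZ by (rule subgroup.subset)
  have Ucar: "U \<subseteq> carrier PGL2" using sU by (rule subgroup.subset)
  have Vcar: "V \<subseteq> carrier PGL2" using sV by (rule subgroup.subset)
  obtain c where c: "c \<in> Zs" and gen: "generate (PGL2\<lparr>carrier := Zs\<rparr>) {c} = Zs"
    and cardZ: "card Zs = 5"
    using cyc unfolding is_cyclic_of_order_def order_def Zs_def by auto
  have ordc: "group.ord (PGL2\<lparr>carrier := Zs\<rparr>) c = 5"
    using group.generate_pow_card[OF ZG, of c] c gen cardZ by simp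
  have c5: "c [^]\<^bsub>PGL2\<^esub> (5::nat) = \<one>\<^bsub>PGL2\<^esub>"
    using group.pow_ord_eq_1[OF ZG, of c] c ordc by (simp add: pow_sub)
  have cne: "c \<noteq> \<one>\<^bsub>PGL2\<^esub>"
    using group.ord_eq_1[OF ZG, of c] c ordc by simp
  have sq1: "y = \<one>\<^bsub>PGL2\<^esub>" if y: "y \<in> Zs" "y \<otimes>\<^bsub>PGL2\<^esub> y = \<one>\<^bsub>PGL2\<^esub>" for y
  proof -
    have "y [^]\<^bsub>PGL2\<lparr>carrier := Zs\<rparr>\<^esub> (2::nat) = \<one>\<^bsub>PGL2\<lparr>carrier := Zs\<rparr>\<^esub>"
      using y Zcar by (simp add: pow_sub eval_nat_numeral subsetD)
    hence d2: "group.ord (PGL2\<lparr>carrier := Zs\<rparr>) y dvd 2" using group.pow_eq_id[OF ZG, of y] y by simp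
    have d5: "group.ord (PGL2\<lparr>carrier := Zs\<rparr>) y dvd 5"
      using group.ord_dvd_group_order[OF ZG, of y] y cardZ by (simp add: order_def)
    have "group.ord (PGL2\<lparr>carrier := Zs\<rparr>) y = 1"
    proof -
      have "group.ord (PGL2\<lparr>carrier := Zs\<rparr>) y dvd gcd 2 5" using gcd_greatest[OF d2 d5] .
      moreover have "gcd 2 (5::nat) = 1" by simp
      ultimately show ?thesis by simp
    qed
    thus ?thesis using group.ord_eq_1[OF ZG, of y] y by simp
  qed
  have ccar: "c \<in> carrier PGL2" using c Zcar by auto
  obtain C where C: "det22 C \<noteq> 0" "c = pclass C" using ccar[unfolded PGL2_carrier] by blast
  obtain c1 c2 c3 c4 where C4: "C = (c1,c2,c3,c4)" by (cases C) auto
  have "pclass (mpow22 C 5) = \<one>\<^bsub>PGL2\<^esub>" using c5 C(2) by (simp add: pclass_pow)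
  then obtain e where e: "e \<noteq> 0" "mpow22 C 5 = (e,0,0,e)" using pclass_is_one by blast
  have ns: "\<not> (c2 = 0 \<and> c3 = 0 \<and> c1 = c4)"
  proof
    assume h: "c2 = 0 \<and> c3 = 0 \<and> c1 = c4"
    hence "c1 \<noteq> 0" using C(1) C4 by auto
    hence "c = \<one>\<^bsub>PGL2\<^esub>" using h C(2) C4 pclass_scalar[of c1] by simp
    thus False using cne by simp
  qed
  have disc: "(c1 - c4)^2 + 4 * c2 * c3 = 0" using char5_disc[OF five, of c1 c2 c3 c4 e] e C4 ns by simp
  define M where "M = (c1 - c4, 2 * c2, 2 * c3, - (c1 - c4))"
  have MM: "mmul22 M M = (0,0,0,0)"
  proof -
    have "mmul22 M M = ((c1 - c4)^2 + 4 * c2 * c3, 0, 0, (c1 - c4)^2 + 4 * c2 * c3)"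
      by (simp add: M_def algebra_simps power2_eq_square)
    thus ?thesis using disc by simp
  qed
  have Mnz: "M \<noteq> (0,0,0,0)" using ns two by (auto simp: M_def)
  define Zf where "Zf z \<longleftrightarrow> (\<exists>al be. z = pclass (al + be * c1, be * c2, be * c3, al + be * c4))" for z
  have Zform: "Zf z" if "z \<in> generate (PGL2\<lparr>carrier := Zs\<rparr>) {c}" for z
    using that
  proof (induction rule: generate.induct)
    case one thus ?case unfolding Zf_def by (intro exI[of _ 1] exI[of _ 0]) (simp add: PGL2_one)
  next
    case (incl h) thus ?case unfolding Zf_def using C C4 by (intro exI[of _ 0] exI[of _ 1]) simp
  next
    case (inv h)
    hence "h = c" by simp
    hence "inv\<^bsub>PGL2\<lparr>carrier := Zs\<rparr>\<^esub> h = pclass (adj22 C)"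
      using P.m_inv_consistent[OF sZ c] inv_pclass[OF C(1)] C(2) by simp
    thus ?case unfolding Zf_def C4 by (intro exI[of _ "c1 + c4"] exI[of _ "-1"]) simp
  next
    case (eng h1 h2)
    then obtain a1 b1 a2 b2 where h1: "h1 = pclass (a1 + b1 * c1, b1 * c2, b1 * c3, a1 + b1 * c4)"
      and h2: "h2 = pclass (a2 + b2 * c1, b2 * c2, b2 * c3, a2 + b2 * c4)" unfolding Zf_def by blast
    show ?case unfolding Zf_def h1 h2
      by (intro exI[of _ "a1 * a2 - b1 * b2 * (c1 * c4 - c2 * c3)"]
          exI[of _ "a1 * b2 + a2 * b1 + b1 * b2 * (c1 + c4)"]) (simp add: PGL2_mult algebra_simps)
  qed
  \<comment> \<open>elements normalizing Zs preserve the line\<close>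
  have conjM: "mmul22 (mmul22 M Xm) M = (0,0,0,0)"
    if x: "x \<in> carrier PGL2" "x \<otimes>\<^bsub>PGL2\<^esub> c \<otimes>\<^bsub>PGL2\<^esub> inv\<^bsub>PGL2\<^esub> x \<in> Zs" "det22 Xm \<noteq> 0" "x = pclass Xm" for x Xm
  proof -
    have "Zf (x \<otimes>\<^bsub>PGL2\<^esub> c \<otimes>\<^bsub>PGL2\<^esub> inv\<^bsub>PGL2\<^esub> x)" using Zform x(2) gen by simp
    then obtain al be where "pclass (mmul22 (mmul22 Xm C) (adj22 Xm)) = pclass (al + be * c1, be * c2, be * c3, al + be * c4)"
      unfolding Zf_def using x(3,4) C(2) inv_pclass[OF x(3)] by (auto simp: PGL2_mult)
    then obtain t where t: "t \<noteq> 0" "(al + be * c1, be * c2, be * c3, al + be * c4) = smul22 t (mmul22 (mmul22 Xm C) (adj22 Xm))"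
      unfolding pclass_eq_iff by blast
    have "mmul22 (mmul22 Xm (c1,c2,c3,c4)) (adj22 Xm) = smul22 (inverse t) (al + be * c1, be * c2, be * c3, al + be * c4)"
      unfolding t(2) using t(1) by (simp add: smul22_smul22 C4)
    from norm_line[OF two disc x(3) this] show ?thesis by (simp add: M_def)
  qed
  have invol: "x4 = - x1" if x: "x \<otimes>\<^bsub>PGL2\<^esub> x = \<one>\<^bsub>PGL2\<^esub>" "x \<noteq> \<one>\<^bsub>PGL2\<^esub>" "x = pclass (x1,x2,x3,x4)" for x x1 x2 x3 x4
  proof -
    obtain e where e: "e \<noteq> 0" "mmul22 (x1,x2,x3,x4) (x1,x2,x3,x4) = (e,0,0,e)"
      using pclass_is_one[of "mmul22 (x1,x2,x3,x4) (x1,x2,x3,x4)"] x(1,3) by (auto simp: PGL2_mult)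
    have "\<not> (x2 = 0 \<and> x3 = 0 \<and> x1 = x4)"
    proof
      assume h: "x2 = 0 \<and> x3 = 0 \<and> x1 = x4"
      hence "x1 * x1 = e" using e(2) by simp
      hence "x1 \<noteq> 0" using e(1) by auto
      thus False using x(2,3) h pclass_scalar[of x1] by simp
    qed
    thus ?thesis using invol_trace[OF e(2)] by simp
  qed
  obtain s where sU': "s \<in> U" and ords: "group.ord (PGL2\<lparr>carrier := U\<rparr>) s = 2"
    and ordU: "card U = 10" and finU: "finite U"
    using dih unfolding is_dihedral_def order_def by auto
  have ss: "s \<otimes>\<^bsub>PGL2\<^esub> s = \<one>\<^bsub>PGL2\<^esub>"
    using group.pow_ord_eq_1[OF UG, of s] sU' ords Ucar by (simp add: pow_sub eval_nat_numeral subsetD)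
  have sne: "s \<noteq> \<one>\<^bsub>PGL2\<^esub>" using group.ord_eq_1[OF UG, of s] sU' ords by simp
  have snZ: "s \<notin> Zs" using sq1[of s] ss sne by blast
  have snorm: "s \<otimes>\<^bsub>PGL2\<^esub> c \<otimes>\<^bsub>PGL2\<^esub> inv\<^bsub>PGL2\<^esub> s \<in> Zs"
  proof -
    have "subgroup Zs (PGL2\<lparr>carrier := U\<rparr>)" using P.subgroup_incl[OF sZ sU ZsU] .
    from group.index2_normal[OF UG _ this, of s c] finU ordU cardZ sU' snZ c
    have "s \<otimes>\<^bsub>PGL2\<^esub> c \<otimes>\<^bsub>PGL2\<^esub> inv\<^bsub>PGL2\<lparr>carrier := U\<rparr>\<^esub> s \<in> Zs" by simp
    thus ?thesis using P.m_inv_consistent[OF sU sU'] by simp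
  qed
  obtain phi where phi: "phi \<in> iso (PGL2\<lparr>carrier := V\<rparr>) (alt_group 5)" using iso unfolding is_iso_def by auto
  have phih: "phi \<in> hom (PGL2\<lparr>carrier := V\<rparr>) (alt_group 5)" and phib: "bij_betw phi V (carrier (alt_group 5))"
    using phi unfolding iso_def by auto
  have phii: "inj_on phi V" using phib by (simp add: bij_betw_def)
  interpret GH: group_hom "PGL2\<lparr>carrier := V\<rparr>" "alt_group 5" phi
    using VG alt_group_is_group phih by (simp add: group_hom_def group_hom_axioms_def)
  have phim: "phi (x \<otimes>\<^bsub>PGL2\<^esub> y) = phi x \<otimes>\<^bsub>alt_group 5\<^esub> phi y" if "x \<in> V" "y \<in> V" for x y
    using hom_mult[OF phih, of x y] that by simp
  have phi1: "phi \<one>\<^bsub>PGL2\<^esub> = \<one>\<^bsub>alt_group 5\<^esub>" using GH.hom_one by simp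
  have oneV: "\<one>\<^bsub>PGL2\<^esub> \<in> V" using sV by (rule subgroup.one_closed)
  have cV: "c \<in> V" using c ZsV by auto
  have a5: "phi c [^]\<^bsub>alt_group 5\<^esub> (5::nat) = \<one>\<^bsub>alt_group 5\<^esub>"
    using GH.hom_nat_pow[of c 5] cV c5 phi1 by (simp add: pow_sub)
  have ane: "phi c \<noteq> \<one>\<^bsub>alt_group 5\<^esub>"
    using inj_onD[OF phii, of c "\<one>\<^bsub>PGL2\<^esub>"] cV oneV phi1 cne by auto
  have ac: "phi c \<in> carrier (alt_group 5)" using phib cV bij_betwE by blast
  obtain tau where tau: "tau \<in> carrier (alt_group 5)" "tau \<noteq> \<one>\<^bsub>alt_group 5\<^esub>"
    "tau \<otimes>\<^bsub>alt_group 5\<^esub> tau = \<one>\<^bsub>alt_group 5\<^esub>"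
    "tau \<otimes>\<^bsub>alt_group 5\<^esub> phi c \<otimes>\<^bsub>alt_group 5\<^esub> tau \<otimes>\<^bsub>alt_group 5\<^esub> phi c = \<one>\<^bsub>alt_group 5\<^esub>"
    using A5_invol[OF ac a5 ane] by blast
  define s' where "s' = inv_into V phi tau"
  have s'V: "s' \<in> V" unfolding s'_def using phib tau(1) by (metis bij_betw_def inv_into_into)
  have phis': "phi s' = tau" unfolding s'_def using phib tau(1) by (metis bij_betw_inv_into_right)
  have s's': "s' \<otimes>\<^bsub>PGL2\<^esub> s' = \<one>\<^bsub>PGL2\<^esub>"
  proof (rule inj_onD[OF phii])
    have "s' \<otimes>\<^bsub>PGL2\<^esub> s' \<in> V" using s'V sV by (simp add: subgroup.m_closed)
    thus "phi (s' \<otimes>\<^bsub>PGL2\<^esub> s') = phi \<one>\<^bsub>PGL2\<^esub>" using phim[OF s'V s'V] phis' tau(3) phi1 by simp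
  qed (use s'V sV oneV in \<open>auto simp: subgroup.m_closed\<close>)
  have s'c: "s' \<otimes>\<^bsub>PGL2\<^esub> c \<otimes>\<^bsub>PGL2\<^esub> s' \<otimes>\<^bsub>PGL2\<^esub> c = \<one>\<^bsub>PGL2\<^esub>"
  proof (rule inj_onD[OF phii])
    have m1: "s' \<otimes>\<^bsub>PGL2\<^esub> c \<in> V" using s'V cV sV by (simp add: subgroup.m_closed)
    have m2: "s' \<otimes>\<^bsub>PGL2\<^esub> c \<otimes>\<^bsub>PGL2\<^esub> s' \<in> V" using m1 s'V sV by (simp add: subgroup.m_closed)
    have m3: "s' \<otimes>\<^bsub>PGL2\<^esub> c \<otimes>\<^bsub>PGL2\<^esub> s' \<otimes>\<^bsub>PGL2\<^esub> c \<in> V" using m2 cV sV by (simp add: subgroup.m_closed)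
    show "s' \<otimes>\<^bsub>PGL2\<^esub> c \<otimes>\<^bsub>PGL2\<^esub> s' \<otimes>\<^bsub>PGL2\<^esub> c \<in> V" by (fact m3)
    show "\<one>\<^bsub>PGL2\<^esub> \<in> V" by (fact oneV)
    show "phi (s' \<otimes>\<^bsub>PGL2\<^esub> c \<otimes>\<^bsub>PGL2\<^esub> s' \<otimes>\<^bsub>PGL2\<^esub> c) = phi \<one>\<^bsub>PGL2\<^esub>"
      using phim[OF m2 cV] phim[OF m1 s'V] phim[OF s'V cV] phis' tau(4) phi1 by simp
  qed
  have s'ne: "s' \<noteq> \<one>\<^bsub>PGL2\<^esub>" using phis' phi1 tau(2) by auto
  have s'nZ: "s' \<notin> Zs" using sq1[of s'] s's' s'ne by blast
  have s'car: "s' \<in> carrier PGL2" using s'V Vcar by auto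
  have s'norm: "s' \<otimes>\<^bsub>PGL2\<^esub> c \<otimes>\<^bsub>PGL2\<^esub> inv\<^bsub>PGL2\<^esub> s' \<in> Zs"
  proof -
    have is': "inv\<^bsub>PGL2\<^esub> s' = s'" using P.inv_equality[OF s's' s'car s'car] .
    have "inv\<^bsub>PGL2\<^esub> c = s' \<otimes>\<^bsub>PGL2\<^esub> c \<otimes>\<^bsub>PGL2\<^esub> s'"
      using P.inv_equality[OF s'c ccar] s'car ccar by simp
    moreover have "inv\<^bsub>PGL2\<^esub> c \<in> Zs" using sZ c by (rule subgroup.m_inv_closed)
    ultimately show ?thesis using is' by simp
  qed
  have scar: "s \<in> carrier PGL2" using sU' Ucar by auto
  obtain Xm where Xm: "det22 Xm \<noteq> 0" "s = pclass Xm" using scar[unfolded PGL2_carrier] by blast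
  obtain Ym where Ym: "det22 Ym \<noteq> 0" "s' = pclass Ym" using s'car[unfolded PGL2_carrier] by blast
  obtain x1 x2 x3 x4 where X4: "Xm = (x1,x2,x3,x4)" by (cases Xm) auto
  obtain y1 y2 y3 y4 where Y4: "Ym = (y1,y2,y3,y4)" by (cases Ym) auto
  have x4: "x4 = - x1" using invol[OF ss sne] Xm(2) X4 by simp
  have y4: "y4 = - y1" using invol[OF s's' s'ne] Ym(2) Y4 by simp
  have MXM: "mmul22 (mmul22 M Xm) M = (0,0,0,0)" using conjM[OF scar snorm Xm] .
  have MYM: "mmul22 (mmul22 M Ym) M = (0,0,0,0)" using conjM[OF s'car s'norm Ym] .
  have dp: "(x2 * y3 - x3 * y2)^2 + (4 * (x1 * y2) - 4 * (x2 * y1)) * (x3 * y1 - x1 * y3) = 0"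
    using disc_prod[of "c1 - c4" "2 * c2" "2 * c3" x1 x2 x3 y1 y2 y3] MM MXM MYM Mnz
    unfolding M_def X4 Y4 x4 y4 by simp
  define P where "P = mmul22 Xm Ym"
  have P4: "P = (x1 * y1 + x2 * y3, x1 * y2 + x2 * y4, x3 * y1 + x4 * y3, x3 * y2 + x4 * y4)"
    by (simp add: P_def X4 Y4)
  have discP: "((x1 * y1 + x2 * y3) - (x3 * y2 + x4 * y4))^2 + 4 * (x1 * y2 + x2 * y4) * (x3 * y1 + x4 * y3) = 0"
  proof -
    have "((x1 * y1 + x2 * y3) - (x3 * y2 + x4 * y4))^2 + 4 * (x1 * y2 + x2 * y4) * (x3 * y1 + x4 * y3)
      = (x2 * y3 - x3 * y2)^2 + (4 * (x1 * y2) - 4 * (x2 * y1)) * (x3 * y1 - x1 * y3)"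
      unfolding x4 y4 by (simp add: algebra_simps power2_eq_square)
    thus ?thesis using dp by simp
  qed
  have detP: "det22 (x1 * y1 + x2 * y3, x1 * y2 + x2 * y4, x3 * y1 + x4 * y3, x3 * y2 + x4 * y4) \<noteq> 0"
    using Xm(1) Ym(1) det22_mmul[of Xm Ym] P4 unfolding P_def by simp
  obtain f where f: "f \<noteq> 0" "mpow22 P 5 = (f,0,0,f)"
    using char5_pow[OF five discP detP] P4 by auto
  have "(s \<otimes>\<^bsub>PGL2\<^esub> s') [^]\<^bsub>PGL2\<^esub> (5::nat) = \<one>\<^bsub>PGL2\<^esub>"
    using Xm(2) Ym(2) f by (simp add: PGL2_mult pclass_pow P_def[symmetric] pclass_scalar)
  thus ?thesis using sU' s'V snZ s'nZ unfolding Zs_def by blast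
qed


lemma foldr5:
  fixes Nc :: "'k::field mat22 set set"
  assumes s: "s \<in> carrier PGL2" "s' \<in> carrier PGL2"
  shows "foldr (\<otimes>\<^bsub>PGL2\<lparr>carrier := Nc\<rparr>\<^esub>) [s, s', s, s', s, s', s, s', s, s'] \<one>\<^bsub>PGL2\<lparr>carrier := Nc\<rparr>\<^esub>
     = (s \<otimes>\<^bsub>PGL2\<^esub> s') [^]\<^bsub>PGL2\<^esub> (5::nat)"
proof -
  interpret P: group "PGL2 :: 'k mat22 set monoid" by (rule group_PGL2)
  define p where "p = s \<otimes>\<^bsub>PGL2\<^esub> s'"
  have pc: "p \<in> carrier PGL2" using s by (simp add: p_def)
  have "p [^]\<^bsub>PGL2\<^esub> (5::nat) = p \<otimes>\<^bsub>PGL2\<^esub> (p \<otimes>\<^bsub>PGL2\<^esub> (p \<otimes>\<^bsub>PGL2\<^esub> (p \<otimes>\<^bsub>PGL2\<^esub> p)))"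
    using pc by (simp add: eval_nat_numeral P.m_assoc)
  also have "\<dots> = foldr (\<otimes>\<^bsub>PGL2\<^esub>) [s, s', s, s', s, s', s, s', s, s'] \<one>\<^bsub>PGL2\<^esub>"
    using s by (simp add: p_def P.m_assoc)
  finally show ?thesis by (simp add: p_def)
qed

lemma alt10:
  assumes "s \<in> A" "s' \<in> B"
  shows "alternating A B [s, s', s, s', s, s', s, s', s, s']"
proof -
  have "\<forall>i. Suc i < 10 \<longrightarrow> ([s, s', s, s', s, s', s, s', s, s'] ! i \<in> A \<and> [s, s', s, s', s, s', s, s', s, s'] ! Suc i \<in> B) \<or>
       ([s, s', s, s', s, s', s, s', s, s'] ! i \<in> B \<and> [s, s', s, s', s, s', s, s', s, s'] ! Suc i \<in> A)"
  proof (intro allI impI)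
    fix i :: nat assume "Suc i < 10"
    hence "i = 0 \<or> i = 1 \<or> i = 2 \<or> i = 3 \<or> i = 4 \<or> i = 5 \<or> i = 6 \<or> i = 7 \<or> i = 8" by linarith
    thus "([s, s', s, s', s, s', s, s', s, s'] ! i \<in> A \<and> [s, s', s, s', s, s', s, s', s, s'] ! Suc i \<in> B) \<or>
       ([s, s', s, s', s, s', s, s', s, s'] ! i \<in> B \<and> [s, s', s, s', s, s', s, s', s, s'] ! Suc i \<in> A)"
      by (elim disjE) (simp_all add: assms)
  qed
  thus ?thesis unfolding alternating_def using assms by simp
qed


theorem lemma2p3:
  fixes v :: "'k::field \<Rightarrow> real" and \<Gamma> :: "'k mat22 set set" and g :: nat
  assumes "nonarch_valued_field v"
    and "CHAR('k) = 0 \<longrightarrow> residue_char v = 0 \<or> residue_char v > 5"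
    and "schottky_group v \<Gamma> g"
    and "g \<in> {5, 6, 7, 8}"
    and "order (aut_group \<Gamma>) = 12 * (g - 1)"
    and "iso_D5_amalg_Z5_A5 (normalizer_group \<Gamma>)"
  shows "g = 6 \<and> CHAR('k) \<noteq> 5 \<and> aut_group \<Gamma> \<cong> alt_group 5"
proof -
  interpret P: group "PGL2 :: 'k mat22 set monoid" by (rule group_PGL2)
  obtain S where Gsub: "subgroup \<Gamma> PGL2" and SG: "S \<subseteq> \<Gamma>" and genS: "generate PGL2 S = \<Gamma>"
    and FREE: "\<And>w. w \<noteq> [] \<Longrightarrow> set (map fst w) \<subseteq> S \<Longrightarrow> reduced_word w \<Longrightarrow> word_eval PGL2 w \<noteq> \<one>\<^bsub>PGL2\<^esub>"
    using assms(3) unfolding schottky_group_def free_subgroup_of_rank_def by blast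
  have Gcar: "\<Gamma> \<subseteq> carrier PGL2" using Gsub by (rule subgroup.subset)
  have Scar: "S \<subseteq> carrier PGL2" using SG Gcar by auto
  have torsion: "x = \<one>\<^bsub>PGL2\<^esub>" if x: "x \<in> \<Gamma>" "(n::nat) > 0" "x [^]\<^bsub>PGL2\<^esub> n = \<one>\<^bsub>PGL2\<^esub>" for x n
  proof -
    obtain w where w: "reduced_word w" "set (map fst w) \<subseteq> S" "word_eval PGL2 w = x"
      using P.generate_words[OF Scar, of x] x(1) genS by auto
    show ?thesis
    proof (cases "w = []")
      case True thus ?thesis using w by simp
    next
      case False
      thus ?thesis using P.free_torsion[OF FREE Scar w(1) False w(2) x(2)] w(3) x(3) by simp
    qed
  qed
  define Nc where "Nc = normalizer PGL2 \<Gamma>"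
  have NG: "normalizer_group \<Gamma> = PGL2\<lparr>carrier := Nc\<rparr>" by (simp add: normalizer_group_def Nc_def)
  have sN: "subgroup Nc PGL2" unfolding Nc_def using P.normalizer_imp_subgroup[OF Gcar] .
  have NGg: "group (PGL2\<lparr>carrier := Nc\<rparr>)" using P.subgroup_imp_group[OF sN] .
  have nG: "normal \<Gamma> (PGL2\<lparr>carrier := Nc\<rparr>)" unfolding Nc_def using P.subgroup_in_normalizer[OF Gsub] .
  obtain U V where am: "internal_amalgam (PGL2\<lparr>carrier := Nc\<rparr>) U V"
    and dih: "is_dihedral (PGL2\<lparr>carrier := U\<rparr>) 5"
    and isoV: "PGL2\<lparr>carrier := V\<rparr> \<cong> alt_group 5"
    and cyc: "is_cyclic_of_order (PGL2\<lparr>carrier := U \<inter> V\<rparr>) 5"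
    using assms(6) unfolding iso_D5_amalg_Z5_A5_def NG by auto
  have sUN: "subgroup U (PGL2\<lparr>carrier := Nc\<rparr>)" and sVN: "subgroup V (PGL2\<lparr>carrier := Nc\<rparr>)"
    using am unfolding internal_amalgam_def by auto
  have sU: "subgroup U PGL2" using P.incl_subgroup[OF sN sUN] .
  have sV: "subgroup V PGL2" using P.incl_subgroup[OF sN sVN] .
  have VN: "V \<subseteq> Nc" using sVN subgroup.subset by force
  have VG: "group (PGL2\<lparr>carrier := V\<rparr>)" using P.subgroup_imp_group[OF sV] .
  have cardV: "card V = 60"
  proof -
    have "card V = card (carrier (alt_group 5))" using iso_same_card[OF isoV] by simp
    moreover have "2 * card (carrier (alt_group 5)) = fact 5" by (rule alt_group_card_carrier) simp
    ultimately show ?thesis by (simp add: fact_numeral)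
  qed
  define Gq where "Gq = PGL2\<lparr>carrier := Nc\<rparr> Mod \<Gamma>"
  have aut: "aut_group \<Gamma> = Gq" by (simp add: aut_group_def Gq_def NG)
  have Gqg: "group Gq" unfolding Gq_def using normal.factorgroup_is_group[OF nG] .
  have ordG: "order Gq = 12 * (g - 1)" using assms(5) aut by simp
  have gpos: "g \<ge> 5" using assms(4) by auto
  have "order Gq > 0" using ordG gpos by simp
  hence finG: "finite (carrier Gq)" unfolding order_def using card_gt_0_iff by blast
  define h where "h a = r_coset (PGL2\<lparr>carrier := Nc\<rparr>) \<Gamma> a" for a
  have hN: "h \<in> hom (PGL2\<lparr>carrier := Nc\<rparr>) Gq" unfolding h_def Gq_def using normal.r_coset_hom_Mod[OF nG] .
  have hV: "h \<in> hom (PGL2\<lparr>carrier := V\<rparr>) Gq"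
    using hN VN unfolding hom_def by (auto simp: Pi_def subsetD)
  have inj: "inj_on h V"
  proof
    fix x y assume xy: "x \<in> V" "y \<in> V" "h x = h y"
    have xN: "x \<in> Nc" and yN: "y \<in> Nc" using xy VN by auto
    have Gsub2: "subgroup \<Gamma> (PGL2\<lparr>carrier := Nc\<rparr>)" using nG by (simp add: normal_def)
    have "x \<in> r_coset (PGL2\<lparr>carrier := Nc\<rparr>) \<Gamma> y"
      using group.rcos_self[OF NGg, of x \<Gamma>] xN Gsub2 xy(3) unfolding h_def by simp
    hence zG: "x \<otimes>\<^bsub>PGL2\<^esub> inv\<^bsub>PGL2\<lparr>carrier := Nc\<rparr>\<^esub> y \<in> \<Gamma>"
      using subgroup.rcos_module_imp[OF Gsub2 NGg, of y x] yN by simp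
    have iy: "inv\<^bsub>PGL2\<lparr>carrier := Nc\<rparr>\<^esub> y = inv\<^bsub>PGL2\<^esub> y" using P.m_inv_consistent[OF sN yN] .
    define z where "z = x \<otimes>\<^bsub>PGL2\<^esub> inv\<^bsub>PGL2\<^esub> y"
    have zV: "z \<in> V" unfolding z_def using xy sV by (simp add: subgroup.m_closed subgroup.m_inv_closed)
    have "z [^]\<^bsub>PGL2\<lparr>carrier := V\<rparr>\<^esub> order (PGL2\<lparr>carrier := V\<rparr>) = \<one>\<^bsub>PGL2\<lparr>carrier := V\<rparr>\<^esub>"
      using group.pow_order_eq_1[OF VG, of z] zV by simp
    hence "z [^]\<^bsub>PGL2\<^esub> (60::nat) = \<one>\<^bsub>PGL2\<^esub>" using cardV by (simp add: pow_sub order_def)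
    hence "z = \<one>\<^bsub>PGL2\<^esub>" using torsion[of z 60] zG iy by (simp add: z_def)
    moreover have xc: "x \<in> carrier PGL2" and yc: "y \<in> carrier PGL2" using xy sV subgroup.mem_carrier by force+
    moreover have "x = (x \<otimes>\<^bsub>PGL2\<^esub> inv\<^bsub>PGL2\<^esub> y) \<otimes>\<^bsub>PGL2\<^esub> y" using xc yc by (simp add: P.m_assoc)
    ultimately show "x = y" unfolding z_def by simp
  qed
  have hVsub: "subgroup (h ` V) Gq"
  proof -
    interpret GH: group_hom "PGL2\<lparr>carrier := V\<rparr>" Gq h
      using VG Gqg hV by (simp add: group_hom_def group_hom_axioms_def)
    show ?thesis using GH.subgroup_img_is_subgroup[OF group.subgroup_self[OF VG]] by simp
  qed
  have cardhV: "card (h ` V) = 60" using card_image[OF inj] cardV by simp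
  have "card (rcosets\<^bsub>Gq\<^esub> (h ` V)) * card (h ` V) = order Gq" using group.lagrange[OF Gqg hVsub] .
  hence dvd: "60 dvd 12 * (g - 1)" using cardhV ordG by (metis dvd_triv_right)
  have g6: "g = 6" using assms(4) dvd by auto
  have "h ` V = carrier Gq"
  proof (rule card_subset_eq[OF finG])
    show "h ` V \<subseteq> carrier Gq" using hVsub by (rule subgroup.subset)
    show "card (h ` V) = card (carrier Gq)" using cardhV ordG g6 by (simp add: order_def)
  qed
  hence "h \<in> iso (PGL2\<lparr>carrier := V\<rparr>) Gq" using hV inj unfolding iso_def bij_betw_def by simp
  hence "PGL2\<lparr>carrier := V\<rparr> \<cong> Gq" unfolding is_iso_def by auto
  hence "Gq \<cong> PGL2\<lparr>carrier := V\<rparr>" using group.iso_sym[OF VG] by blast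
  hence isoG: "aut_group \<Gamma> \<cong> alt_group 5" using iso_trans[OF _ isoV] aut by simp
  have char: "CHAR('k) \<noteq> 5"
  proof
    assume ch: "CHAR('k) = 5"
    have five: "(5::'k) = 0" using of_nat_CHAR[where 'a='k] ch by simp
    have two: "(2::'k) \<noteq> 0" using of_nat_eq_0_iff_char_dvd[of 2, where 'a='k] ch by simp
    obtain s s' where ss: "s \<in> U - (U \<inter> V)" "s' \<in> V - (U \<inter> V)"
      and p5: "(s \<otimes>\<^bsub>PGL2\<^esub> s') [^]\<^bsub>PGL2\<^esub> (5::nat) = \<one>\<^bsub>PGL2\<^esub>"
      using char5_contra[OF five two sU sV cyc dih isoV] by blast
    define L where "L = [s, s', s, s', s, s', s, s', s, s']"
    have alt: "alternating (U - (U \<inter> V)) (V - (U \<inter> V)) L" using alt10[OF ss(1) ss(2)] unfolding L_def .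
    have scar: "s \<in> carrier PGL2" "s' \<in> carrier PGL2" using ss sU sV subgroup.mem_carrier by force+
    have "foldr (\<otimes>\<^bsub>PGL2\<lparr>carrier := Nc\<rparr>\<^esub>) L \<one>\<^bsub>PGL2\<lparr>carrier := Nc\<rparr>\<^esub> = \<one>\<^bsub>PGL2\<lparr>carrier := Nc\<rparr>\<^esub>"
      unfolding L_def foldr5[OF scar] p5 by simp
    moreover have "L \<noteq> []" by (simp add: L_def)
    ultimately show False using am alt unfolding internal_amalgam_def by blast
  qed
  show ?thesis using g6 char isoG by simp
qed


end
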